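(* Let $f:U\to\Phi^c$ be $k$-odd and, for each $i\in[c]$, let $g_i:\Phi\to\Psi^d$ be $k$-odd. Define $F:U\to\Psi^{[c]\times[d]}$ by $F(x)_{(i,j)}=g_i(f(x)_i)_j$. Then $F$ is $k$-odd.
   Context: For a vector $y$ indexed by a set $J$, $y_j$ is its coordinate at $j\in J$. An output position character of a function $g:A\to B^J$ is a pair $(j,b)\in J\times B$. The function $g$ is $k$-odd if for every nonempty $X\subseteq A$ with $|X|\le k$ there is an output position character $(j,b)$ such that the number of $x\in X$ with $g(x)_j=b$ is odd. *)

theory Defs
  imports Main
begin

text \<open>A function g : A \<rightarrow> B^J is represented as g :: 'a \<Rightarrow> 'j \<Rightarrow> 'b,
  with domain A = UNIV :: 'a set and index set J given explicitly.
  g is k-odd if for every nonempty X \<subseteq> A with |X| \<le> k there is an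
  output position character (j,b) \<in> J \<times> B such that the number of
  x \<in> X with g x j = b is odd.\<close>

definition k_odd :: "nat \<Rightarrow> 'j set \<Rightarrow> ('a \<Rightarrow> 'j \<Rightarrow> 'b) \<Rightarrow> bool" where
  "k_odd k J g \<longleftrightarrow>
     (\<forall>X :: 'a set. finite X \<and> X \<noteq> {} \<and> card X \<le> k \<longrightarrow>
        (\<exists>j\<in>J. \<exists>b. odd (card {x\<in>X. g x j = b})))"

end

theory Submission
  imports Defs
begin

lemma even_sum_card:
  fixes h :: "'a \<Rightarrow> nat"
  assumes "finite A"
  shows "even (sum h A) = even (card {a\<in>A. odd (h a)})"
  using assms
proof (induction A rule: finite_induct)
  case empty then show ?case by simp
next
  case (insert a A)
  have e: "{x\<in>insert a A. odd (h x)} = (if odd (h a) then insert a {x\<in>A. odd (h x)} else {x\<in>A. odd (h x)})"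
    by auto
  have fin: "finite {x\<in>A. odd (h x)}" using insert by simp
  have nin: "a \<notin> {x\<in>A. odd (h x)}" using insert by simp
  have s: "sum h (insert a A) = h a + sum h A" using insert by simp
  show ?case
  proof (cases "odd (h a)")
    case True
    then show ?thesis using insert(3) fin nin unfolding e s by simp
  next
    case False
    then show ?thesis using insert(3) unfolding e s by simp
  qed
qed

lemma card_fibres:
  fixes t :: "'a \<Rightarrow> 'b"
  assumes "finite X"
  shows "card {x\<in>X. P (t x)} = (\<Sum>y\<in>{y\<in>t ` X. P y}. card {x\<in>X. t x = y})"
proof -
  have "{x\<in>X. P (t x)} = (\<Union>y\<in>{y\<in>t ` X. P y}. {x\<in>X. t x = y})" by auto
  then have "card {x\<in>X. P (t x)} = card (\<Union>y\<in>{y\<in>t ` X. P y}. {x\<in>X. t x = y})" by simp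
  also have "\<dots> = (\<Sum>y\<in>{y\<in>t ` X. P y}. card {x\<in>X. t x = y})"
    by (rule card_UN_disjoint) (use assms in \<open>auto intro: finite_subset\<close>)
  finally show ?thesis .
qed

theorem mainTheorem8:
  fixes k c d :: nat
    and f :: "'u \<Rightarrow> nat \<Rightarrow> 'phi"
    and g :: "nat \<Rightarrow> 'phi \<Rightarrow> nat \<Rightarrow> 'psi"
  assumes "k_odd k {1..c} f"
    and "\<And>i. i \<in> {1..c} \<Longrightarrow> k_odd k {1..d} (g i)"
  shows "k_odd k ({1..c} \<times> {1..d}) (\<lambda>x (i, j). g i (f x i) j)"
  unfolding k_odd_def
proof (intro allI impI)
  fix X :: "'u set"
  assume X: "finite X \<and> X \<noteq> {} \<and> card X \<le> k"
  then obtain i phi where i: "i \<in> {1..c}" and ph: "odd (card {x\<in>X. f x i = phi})"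
    using assms(1) unfolding k_odd_def by blast
  define t where "t = (\<lambda>x. f x i)"
  define Y where "Y = {y\<in>t ` X. odd (card {x\<in>X. t x = y})}"
  have phY: "phi \<in> Y"
  proof -
    have "{x\<in>X. f x i = phi} \<noteq> {}" using ph by (metis card.empty even_zero)
    then show ?thesis unfolding Y_def t_def using ph by auto
  qed
  have finY: "finite Y" unfolding Y_def using X by auto
  have "card Y \<le> card (t ` X)" unfolding Y_def using X by (intro card_mono) auto
  also have "\<dots> \<le> card X" using X by (simp add: card_image_le)
  finally have cY: "card Y \<le> k" using X by simp
  obtain j psi where j: "j \<in> {1..d}" and ps: "odd (card {y\<in>Y. g i y j = psi})"
    using assms(2)[OF i] finY phY cY unfolding k_odd_def by blast
  have "card {x\<in>X. g i (t x) j = psi} = (\<Sum>y\<in>{y\<in>t ` X. g i y j = psi}. card {x\<in>X. t x = y})"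
    using X by (intro card_fibres) simp
  moreover have "{a\<in>{y\<in>t ` X. g i y j = psi}. odd (card {x\<in>X. t x = a})} = {y\<in>Y. g i y j = psi}"
    unfolding Y_def by auto
  moreover have "finite {y\<in>t ` X. g i y j = psi}" using X by auto
  ultimately have "odd (card {x\<in>X. g i (t x) j = psi})"
    using ps even_sum_card[of "{y\<in>t ` X. g i y j = psi}" "\<lambda>y. card {x\<in>X. t x = y}"] by simp
  then have "odd (card {x\<in>X. (\<lambda>x (i, j). g i (f x i) j) x (i, j) = psi})"
    unfolding t_def by simp
  then show "\<exists>p\<in>{1..c} \<times> {1..d}. \<exists>b. odd (card {x\<in>X. (\<lambda>x (i, j). g i (f x i) j) x p = b})"
    using i j by blast
qed

end
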